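(* Let $\bm{X}\in\mathbb{R}^{n_1\times r}$, $\bm{Y}\in\mathbb{R}^{n_2\times r}$, and let $\bm{X}_\star,\bm{Y}_\star$, $\bm{M}_\star=\bm{X}_\star\bm{Y}_\star^\top$ be as in the context. Suppose that $\bm{I}_r$ is a minimizer of $\|\bm{X}\bm{P}-\bm{X}_\star\|_{\mathrm{F}}^2+\|\bm{Y}\bm{P}^{-\top}-\bm{Y}_\star\|_{\mathrm{F}}^2$ over invertible $\bm{P}\in\mathbb{R}^{r\times r}$. Then \[ \big\langle\bm{X}-\bm{X}_\star,(\bm{X}\bm{Y}^\top-\bm{M}_\star)\bm{Y}\big\rangle\ge\|\bm{Y}(\bm{X}-\bm{X}_\star)^\top\|_{\mathrm{F}}^2-\frac14\|\bm{X}-\bm{X}_\star\|_{\mathrm{F}}^4, \] and \[ \big\langle\bm{Y}-\bm{Y}_\star,(\bm{X}\bm{Y}^\top-\bm{M}_\star)^\top\bm{X}\big\rangle\ge\|\bm{X}(\bm{Y}-\bm{Y}_\star)^\top\|_{\mathrm{F}}^2-\frac14\|\bm{Y}-\bm{Y}_\star\|_{\mathrm{F}}^4. \]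
   Context: $\bm{M}_\star\in\mathbb{R}^{n_1\times n_2}$ has rank $r$ and compact SVD $\bm{M}_\star=\bm{U}_\star\bm{\Sigma}_\star\bm{V}_\star^\top$; $\bm{X}_\star=\bm{U}_\star\bm{\Sigma}_\star^{1/2}$, $\bm{Y}_\star=\bm{V}_\star\bm{\Sigma}_\star^{1/2}$, so $\bm{M}_\star=\bm{X}_\star\bm{Y}_\star^\top$. $\langle\bm{A},\bm{B}\rangle=\mathrm{Tr}(\bm{B}^\top\bm{A})$ and $\bm{P}^{-\top}=(\bm{P}^{-1})^\top$. *)

theory Defs
  imports "HOL-Analysis.Analysis"
begin

text \<open>Matrices are rendered as real^'c^'r (rows indexed by 'r, columns by 'c).\<close>

definition mat_inner :: "real^'c^'r \<Rightarrow> real^'c^'r \<Rightarrow> real" where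
  "mat_inner A B = trace (transpose B ** A)"

definition frob_norm :: "real^'c^'r \<Rightarrow> real" where
  "frob_norm A = sqrt (mat_inner A A)"

definition diag_mat :: "real^'n \<Rightarrow> real^'n^'n" where
  "diag_mat s = (\<chi> i j. if i = j then s $ i else 0)"

text \<open>Compact SVD M = U Sigma V^T: U, V have orthonormal columns, Sigma diagonal with
  positive entries (so rank M equals the number of columns r).\<close>
definition compact_svd :: "real^'n2^'n1 \<Rightarrow> real^'r^'n1 \<Rightarrow> real^'r \<Rightarrow> real^'r^'n2 \<Rightarrow> bool" where
  "compact_svd M U s V \<longleftrightarrow>
     transpose U ** U = mat 1 \<and> transpose V ** V = mat 1 \<and> (\<forall>i. s $ i > 0) \<and>
     M = U ** diag_mat s ** transpose V"

end

theory Submission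
  imports Defs
begin

lemma inner_mat: "inner (A::real^'c^'r) B = (\<Sum>i\<in>UNIV. \<Sum>j\<in>UNIV. A$i$j * B$i$j)"
  by (simp add: inner_vec_def)

lemma mat_inner_eq: "mat_inner A B = inner A B"
proof -
  have "mat_inner A B = (\<Sum>i\<in>UNIV. \<Sum>k\<in>UNIV. A$k$i * B$k$i)"
    unfolding mat_inner_def trace_def matrix_matrix_mult_def transpose_def by (simp add: mult.commute)
  also have "\<dots> = (\<Sum>k\<in>UNIV. \<Sum>i\<in>UNIV. A$k$i * B$k$i)" by (rule sum.swap)
  also have "\<dots> = inner A B" by (simp add: inner_mat)
  finally show ?thesis .
qed

lemma frob_sq: "(frob_norm A)\<^sup>2 = (norm A)\<^sup>2"
  by (simp add: frob_norm_def mat_inner_eq power2_norm_eq_inner)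

lemma sum3_rot: "(\<Sum>j\<in>A. \<Sum>k\<in>B. \<Sum>i\<in>C. f i j k) = (\<Sum>i\<in>C. \<Sum>j\<in>A. \<Sum>k\<in>B. f i j k)"
proof -
  have "(\<Sum>j\<in>A. \<Sum>k\<in>B. \<Sum>i\<in>C. f i j k) = (\<Sum>j\<in>A. \<Sum>i\<in>C. \<Sum>k\<in>B. f i j k)"
    by (rule sum.cong[OF refl], rule sum.swap)
  also have "\<dots> = (\<Sum>i\<in>C. \<Sum>j\<in>A. \<Sum>k\<in>B. f i j k)" by (rule sum.swap)
  finally show ?thesis .
qed

lemma inner_mult_left: "inner (A::real^'m^'n) ((B::real^'k^'n) ** C) = inner (transpose B ** A) C"
proof -
  have "inner A (B ** C) = (\<Sum>i\<in>UNIV. \<Sum>k\<in>UNIV. \<Sum>j\<in>UNIV. A$i$k * B$i$j * C$j$k)"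
    unfolding inner_mat matrix_matrix_mult_def by (simp add: sum_distrib_left ac_simps)
  also have "\<dots> = (\<Sum>i\<in>UNIV. \<Sum>j\<in>UNIV. \<Sum>k\<in>UNIV. A$i$k * B$i$j * C$j$k)"
    by (rule sum.cong[OF refl], rule sum.swap)
  also have "\<dots> = (\<Sum>j\<in>UNIV. \<Sum>k\<in>UNIV. \<Sum>i\<in>UNIV. A$i$k * B$i$j * C$j$k)"
    by (rule sum3_rot[symmetric])
  also have "\<dots> = inner (transpose B ** A) C"
    unfolding inner_mat matrix_matrix_mult_def transpose_def
    by (simp add: sum_distrib_left sum_distrib_right ac_simps)
  finally show ?thesis .
qed

lemma inner_mult_right: "inner (A::real^'m^'n) ((B::real^'k^'n) ** C) = inner (A ** transpose C) B"
proof -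
  have "inner A (B ** C) = (\<Sum>i\<in>UNIV. \<Sum>k\<in>UNIV. \<Sum>j\<in>UNIV. A$i$k * B$i$j * C$j$k)"
    unfolding inner_mat matrix_matrix_mult_def by (simp add: sum_distrib_left ac_simps)
  also have "\<dots> = (\<Sum>i\<in>UNIV. \<Sum>j\<in>UNIV. \<Sum>k\<in>UNIV. A$i$k * B$i$j * C$j$k)"
    by (rule sum.cong[OF refl], rule sum.swap)
  also have "\<dots> = inner (A ** transpose C) B"
    unfolding inner_mat matrix_matrix_mult_def transpose_def
    by (simp add: sum_distrib_left sum_distrib_right ac_simps)
  finally show ?thesis .
qed

lemma inner_transpose: "inner (transpose (A::real^'m^'n)) (transpose B) = inner A B"
proof -
  have "inner (transpose A) (transpose B) = (\<Sum>i\<in>UNIV. \<Sum>j\<in>UNIV. A$j$i * B$j$i)"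
    unfolding inner_mat transpose_def by simp
  also have "\<dots> = (\<Sum>j\<in>UNIV. \<Sum>i\<in>UNIV. A$j$i * B$j$i)" by (rule sum.swap)
  also have "\<dots> = inner A B" by (simp add: inner_mat)
  finally show ?thesis .
qed

lemma matrix_inv_eq: fixes P :: "'a::semiring_1^'n^'n"
  assumes "P ** Q = mat 1" "Q ** P = mat 1"
  shows "matrix_inv P = Q" "invertible P"
proof -
  have "\<exists>A'. P ** A' = mat 1 \<and> A' ** P = mat 1" using assms by blast
  then have h: "P ** matrix_inv P = mat 1 \<and> matrix_inv P ** P = mat 1"
    unfolding matrix_inv_def by (rule someI_ex)
  have "matrix_inv P = matrix_inv P ** (P ** Q)" using assms by simp
  also have "\<dots> = Q" using h by (simp add: matrix_mul_assoc)
  finally show "matrix_inv P = Q" .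
  show "invertible P" using assms unfolding invertible_def by blast
qed

definition Emat :: "'r \<Rightarrow> 'r \<Rightarrow> real^'r^'r" where
  "Emat i j = (\<chi> a b. if a = i \<and> b = j then 1 else 0)"

lemma inner_Emat: "inner A (Emat i j) = A$i$j"
proof -
  have "inner A (Emat i j) = (\<Sum>a\<in>UNIV. \<Sum>b\<in>UNIV. if a = i \<and> b = j then A$i$j else 0)"
    unfolding inner_mat Emat_def by (intro sum.cong refl) auto
  also have "\<dots> = (\<Sum>a\<in>UNIV. if a = i then A$i$j else 0)"
  proof (rule sum.cong[OF refl])
    fix a show "(\<Sum>b\<in>UNIV. if a = i \<and> b = j then A$i$j else 0) = (if a = i then A$i$j else 0)"
      by (cases "a = i") simp_all
  qed
  also have "\<dots> = (if i \<in> UNIV then A$i$j else 0)" by (rule sum.delta[OF finite])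
  also have "\<dots> = A$i$j" by simp
  finally show ?thesis .
qed

lemma transpose_Emat: "transpose (Emat i j) = Emat j i"
  unfolding Emat_def transpose_def by (simp add: vec_eq_iff conj_commute)

lemma Emat_sq: "Emat i j ** Emat i j = (if i = j then 1 else 0) *\<^sub>R Emat i j"
  unfolding Emat_def matrix_matrix_mult_def
  by (auto simp: vec_eq_iff if_distrib[of "\<lambda>x. x * _"] sum.delta' cong: if_cong)

lemma mm_add_r: "((A::real^'n^'m) + B) ** C = A ** C + B ** C"
  by (simp add: matrix_matrix_mult_def vec_eq_iff sum.distrib algebra_simps)
lemma mm_add_l: "(A::real^'n^'m) ** (B + C) = A ** B + A ** C"
  by (simp add: matrix_matrix_mult_def vec_eq_iff sum.distrib algebra_simps)
lemma mm_diff_r: "((A::real^'n^'m) - B) ** C = A ** C - B ** C"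
  by (simp add: matrix_matrix_mult_def vec_eq_iff sum_subtractf algebra_simps)
lemma mm_diff_l: "(A::real^'n^'m) ** (B - C) = A ** B - A ** C"
  by (simp add: matrix_matrix_mult_def vec_eq_iff sum_subtractf algebra_simps)
lemma mm_scale_r: "((A::real^'n^'m)) ** (c *\<^sub>R B) = c *\<^sub>R (A ** B)"
  by (simp add: matrix_matrix_mult_def vec_eq_iff sum_distrib_left algebra_simps)
lemma mm_scale_l: "(c *\<^sub>R (A::real^'n^'m)) ** B = c *\<^sub>R (A ** B)"
  by (simp add: matrix_matrix_mult_def vec_eq_iff sum_distrib_left algebra_simps)
lemma tr_add: "transpose ((A::real^'n^'m) + B) = transpose A + transpose B"
  by (simp add: transpose_def vec_eq_iff)
lemma tr_diff: "transpose ((A::real^'n^'m) - B) = transpose A - transpose B"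
  by (simp add: transpose_def vec_eq_iff)

lemma gram_bound: "(norm (transpose (D::real^'r^'n) ** D))\<^sup>2 \<le> (norm D)^4"
proof -
  let ?c = "\<lambda>i. transpose D $ i"
  have comp: "(transpose D ** D) $ i $ j = inner (?c i) (?c j)" for i j
    by (simp add: matrix_matrix_mult_def transpose_def inner_vec_def)
  have "(norm (transpose D ** D))\<^sup>2 = inner (transpose D ** D) (transpose D ** D)"
    by (rule power2_norm_eq_inner)
  also have "\<dots> = (\<Sum>i\<in>UNIV. \<Sum>j\<in>UNIV. (inner (?c i) (?c j))\<^sup>2)"
    by (simp only: inner_mat comp power2_eq_square)
  also have "\<dots> \<le> (\<Sum>i\<in>UNIV. \<Sum>j\<in>UNIV. (norm (?c i))\<^sup>2 * (norm (?c j))\<^sup>2)"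
  proof (intro sum_mono)
    fix i j
    have "\<bar>inner (?c i) (?c j)\<bar> \<le> norm (?c i) * norm (?c j)" by (rule Cauchy_Schwarz_ineq2)
    then have "\<bar>inner (?c i) (?c j)\<bar>\<^sup>2 \<le> (norm (?c i) * norm (?c j))\<^sup>2"
      by (rule power_mono) simp
    then show "(inner (?c i) (?c j))\<^sup>2 \<le> (norm (?c i))\<^sup>2 * (norm (?c j))\<^sup>2"
      by (simp add: power_mult_distrib)
  qed
  also have "\<dots> = (\<Sum>i\<in>UNIV. (norm (?c i))\<^sup>2) * (\<Sum>i\<in>UNIV. (norm (?c i))\<^sup>2)"
    by (rule sum_product[symmetric])
  also have "\<dots> = (\<Sum>i\<in>UNIV. (norm (?c i))\<^sup>2)\<^sup>2"
    by (rule power2_eq_square[symmetric])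
  also have "(\<Sum>i\<in>UNIV. (norm (?c i))\<^sup>2) = (norm (transpose D))\<^sup>2"
    by (simp add: power2_norm_eq_inner inner_vec_def)
  also have "(norm (transpose D))\<^sup>2 = (norm D)\<^sup>2"
    by (simp add: power2_norm_eq_inner inner_transpose)
  finally show ?thesis by simp
qed

lemma norm_expand: "(norm (D + t *\<^sub>R M))\<^sup>2 = (norm D)\<^sup>2 + 2 * t * inner D M + t\<^sup>2 * (norm (M::'a::real_inner))\<^sup>2"
proof -
  have e: "inner (D + t *\<^sub>R M) (D + t *\<^sub>R M) = inner D D + t * inner D M + t * inner M D + t * t * inner M M"
    by (simp add: inner_add_left inner_add_right distrib_left)
  have "inner M D = inner D M" by (rule inner_commute)
  with e show ?thesis unfolding power2_norm_eq_inner by (simp add: power2_eq_square)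
qed

lemma core:
  fixes X Xs :: "real^'r^'n1" and Y Ys :: "real^'r^'n2"
  assumes bal: "transpose (X - Xs) ** X = transpose Y ** (Y - Ys)"
  shows "inner (X - Xs) ((X ** transpose Y - Xs ** transpose Ys) ** Y)
     \<ge> (norm (Y ** transpose (X - Xs)))\<^sup>2 - 1/4 * (norm (X - Xs))^4"
proof -
  define D where "D = X - Xs"
  define F where "F = Y - Ys"
  have X: "X = Xs + D" and Ys: "Ys = Y - F" unfolding D_def F_def by simp_all
  have e1: "X ** transpose Y - Xs ** transpose Ys = D ** transpose Y + Xs ** transpose F"
    by (simp add: X Ys mm_add_r mm_diff_l tr_diff)
  have "inner D ((D ** transpose Y + Xs ** transpose F) ** Y)
      = inner D ((D ** transpose Y) ** Y) + inner D (Xs ** (transpose F ** Y))"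
    by (simp add: mm_add_r inner_add_right matrix_mul_assoc)
  also have "inner D ((D ** transpose Y) ** Y) = inner (D ** transpose Y) (D ** transpose Y)"
    by (simp add: inner_mult_right)
  also have "\<dots> = (norm (Y ** transpose D))\<^sup>2"
    by (metis inner_transpose matrix_transpose_mul power2_norm_eq_inner transpose_transpose)
  also have "inner D (Xs ** (transpose F ** Y)) = inner (transpose Xs ** D) (transpose F ** Y)"
    by (rule inner_mult_left)
  also have "transpose F ** Y = transpose Xs ** D + transpose D ** D"
  proof -
    have "transpose F ** Y = transpose (transpose Y ** F)" by (simp add: matrix_transpose_mul)
    also have "\<dots> = transpose (transpose D ** X)" using bal by (simp add: D_def F_def)
    also have "\<dots> = transpose X ** D" by (simp add: matrix_transpose_mul)
    also have "\<dots> = transpose Xs ** D + transpose D ** D" by (simp add: X tr_add mm_add_r)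
    finally show ?thesis .
  qed
  finally have L: "inner D ((D ** transpose Y + Xs ** transpose F) ** Y) =
     (norm (Y ** transpose D))\<^sup>2 + inner (transpose Xs ** D) (transpose Xs ** D + transpose D ** D)" .
  define A where "A = transpose Xs ** D"
  define B where "B = transpose D ** D"
  have nA: "(norm (A + (1/2) *\<^sub>R B))\<^sup>2 = (norm A)\<^sup>2 + inner A B + 1/4 * (norm B)\<^sup>2"
    using norm_expand[of A "1/2" B] by (simp add: power2_eq_square)
  have iA: "inner A (A + B) = (norm A)\<^sup>2 + inner A B"
    by (simp only: inner_add_right power2_norm_eq_inner)
  have n0: "0 \<le> (norm (A + (1/2) *\<^sub>R B))\<^sup>2" by (rule zero_le_power2)
  have G: "(norm B)\<^sup>2 \<le> (norm D)^4" unfolding B_def by (rule gram_bound)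
  have LL: "inner D ((X ** transpose Y - Xs ** transpose Ys) ** Y) = (norm (Y ** transpose D))\<^sup>2 + inner A (A + B)"
    unfolding e1 L A_def B_def by (rule refl)
  have XD: "X - Xs = D" by (simp add: D_def)
  show ?thesis unfolding XD using LL nA iA n0 G by linarith
qed

lemma frob_eq: "frob_norm A = norm A"
  by (simp add: frob_norm_def mat_inner_eq norm_eq_sqrt_inner)

lemma diag_sq: assumes "\<forall>i. s $ i > 0"
  shows "diag_mat (\<chi> i. sqrt (s $ i)) ** transpose (diag_mat (\<chi> i. sqrt (s $ i))) = diag_mat s"
proof -
  have "(diag_mat (\<chi> i. sqrt (s $ i)) ** transpose (diag_mat (\<chi> i. sqrt (s $ i)))) $ a $ b = diag_mat s $ a $ b" for a b
  proof -
    have "(diag_mat (\<chi> i. sqrt (s $ i)) ** transpose (diag_mat (\<chi> i. sqrt (s $ i)))) $ a $ b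
      = (\<Sum>k\<in>UNIV. if k = a then (if b = a then sqrt (s$a) * sqrt (s$b) else 0) else 0)"
      unfolding diag_mat_def matrix_matrix_mult_def transpose_def
      by (simp only: vec_lambda_beta, rule sum.cong[OF refl], simp)
    also have "\<dots> = (if a \<in> UNIV then (if b = a then sqrt (s$a) * sqrt (s$b) else 0) else 0)"
      by (rule sum.delta[OF finite])
    also have "\<dots> = diag_mat s $ a $ b"
    proof (cases "b = a")
      case True
      have "0 < s $ a" using assms by blast
      then show ?thesis using True by (simp add: diag_mat_def)
    next
      case False
      then show ?thesis by (simp add: diag_mat_def)
    qed
    finally show ?thesis .
  qed
  then show ?thesis by (simp add: vec_eq_iff)
qed

lemma balance:
  fixes X Xs :: "real^'r^'n1" and Y Ys :: "real^'r^'n2"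
  assumes opt: "\<forall>P :: real^'r^'r. invertible P \<longrightarrow>
       (frob_norm (X ** mat 1 - Xs))\<^sup>2 + (frob_norm (Y ** transpose (matrix_inv (mat 1 :: real^'r^'r)) - Ys))\<^sup>2
       \<le> (frob_norm (X ** P - Xs))\<^sup>2 + (frob_norm (Y ** transpose (matrix_inv P) - Ys))\<^sup>2"
  shows "transpose (X - Xs) ** X = transpose Y ** (Y - Ys)"
proof -
  define D where "D = X - Xs"
  define F where "F = Y - Ys"
  have inv1: "matrix_inv (mat 1 :: real^'r^'r) = mat 1" by (rule matrix_inv_eq) simp_all
  have key: "(transpose X ** D) $ i $ j = (transpose Y ** F) $ j $ i" for i j
  proof -
    define E where "E = Emat i j"
    define k :: real where "k = (if i = j then 1 else 0)"
    define u where "u = (\<lambda>t::real. - t / (1 + k * t))"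
    define a where "a = inner D (X ** E)"
    define b where "b = (norm (X ** E))\<^sup>2"
    define c where "c = inner F (Y ** transpose E)"
    define d where "d = (norm (Y ** transpose E))\<^sup>2"
    define h where "h = (\<lambda>t. (norm D)\<^sup>2 + 2 * t * a + t\<^sup>2 * b + ((norm F)\<^sup>2 + 2 * u t * c + (u t)\<^sup>2 * d))"
    have EE: "E ** E = k *\<^sub>R E" unfolding E_def k_def by (rule Emat_sq)
    have h0: "h 0 = (norm D)\<^sup>2 + (norm F)\<^sup>2" by (simp add: h_def u_def)
    have ineq: "h 0 \<le> h t" if t: "\<bar>0 - t\<bar> < 1/2" for t
    proof -
      have k01: "k = 0 \<or> k = 1" by (simp add: k_def)
      have pos: "1 + k * t \<noteq> 0" using k01 t by auto
      define P where "P = mat 1 + t *\<^sub>R E"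
      define Q where "Q = mat 1 + u t *\<^sub>R E"
      have z: "t + u t + t * u t * k = 0" using pos unfolding u_def by (simp add: field_simps)
      have uu: "u t * (1 + t * k) = - t" using pos unfolding u_def by (simp add: field_simps mult.commute)
      have PE: "P ** E = (1 + t * k) *\<^sub>R E"
        unfolding P_def by (simp add: mm_add_r mm_scale_l EE scaleR_add_left)
      have "P ** Q = P + u t *\<^sub>R (P ** E)" by (simp add: Q_def mm_add_l mm_scale_r)
      also have "\<dots> = mat 1 + t *\<^sub>R E + (u t * (1 + t * k)) *\<^sub>R E" unfolding PE by (simp add: P_def)
      also have "\<dots> = mat 1" by (simp add: uu)
      finally have PQ: "P ** Q = mat 1" .
      have QP: "Q ** P = mat 1" by (rule matrix_left_right_inverse1[OF PQ])
      have iP: "invertible P" and mP: "matrix_inv P = Q" using matrix_inv_eq[OF PQ QP] by auto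
      have e1: "X ** P - Xs = D + t *\<^sub>R (X ** E)"
        unfolding P_def D_def by (simp add: mm_add_l mm_scale_r)
      have e2: "Y ** transpose (matrix_inv P) - Ys = F + u t *\<^sub>R (Y ** transpose E)"
      proof -
        have "transpose Q = mat 1 + u t *\<^sub>R transpose E"
          unfolding Q_def by (simp only: tr_add transpose_scalar transpose_mat)
        then have "Y ** transpose Q = Y + u t *\<^sub>R (Y ** transpose E)"
          by (simp only: mm_add_l mm_scale_r matrix_mul_rid)
        then show ?thesis unfolding mP F_def by (simp only: diff_add_eq)
      qed
      have f1: "(frob_norm (X ** P - Xs))\<^sup>2 = (norm D)\<^sup>2 + 2 * t * a + t\<^sup>2 * b"
        unfolding e1 frob_eq a_def b_def by (rule norm_expand)
      have f2: "(frob_norm (Y ** transpose (matrix_inv P) - Ys))\<^sup>2 = (norm F)\<^sup>2 + 2 * u t * c + (u t)\<^sup>2 * d"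
        unfolding e2 frob_eq c_def d_def by (rule norm_expand)
      have "h t = (frob_norm (X ** P - Xs))\<^sup>2 + (frob_norm (Y ** transpose (matrix_inv P) - Ys))\<^sup>2"
        unfolding f1 f2 h_def by (rule refl)
      moreover have "h 0 = (frob_norm (X ** mat 1 - Xs))\<^sup>2 + (frob_norm (Y ** transpose (matrix_inv (mat 1 :: real^'r^'r)) - Ys))\<^sup>2"
        unfolding h0 inv1 frob_eq D_def F_def by (simp only: matrix_mul_rid transpose_mat)
      moreover have "(frob_norm (X ** mat 1 - Xs))\<^sup>2 + (frob_norm (Y ** transpose (matrix_inv (mat 1 :: real^'r^'r)) - Ys))\<^sup>2
       \<le> (frob_norm (X ** P - Xs))\<^sup>2 + (frob_norm (Y ** transpose (matrix_inv P) - Ys))\<^sup>2"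
        using opt iP by blast
      ultimately show ?thesis by (simp only:)
    qed
    have du: "(u has_real_derivative -1) (at 0)"
      unfolding u_def by (rule derivative_eq_intros refl | simp)+
    have u0: "u 0 = 0" by (simp add: u_def)
    have der: "(h has_real_derivative (2 * a - 2 * c)) (at 0)"
      unfolding h_def
      apply (rule derivative_eq_intros refl du | simp only: u0)+
      apply simp
      done
    have "2 * a - 2 * c = 0"
      by (rule DERIV_local_min[OF der, of "1/2"]) (use ineq in auto)
    then have "a = c" by simp
    moreover have "a = (transpose X ** D) $ i $ j"
      unfolding a_def by (simp add: inner_mult_left E_def inner_Emat)
    moreover have "c = (transpose Y ** F) $ j $ i"
      unfolding c_def E_def by (simp add: inner_mult_left transpose_Emat inner_Emat)
    ultimately show ?thesis by simp
  qed
  have "transpose D ** X = transpose Y ** F"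
  proof -
    have "(transpose D ** X) $ j $ i = (transpose Y ** F) $ j $ i" for i j
    proof -
      have "(transpose D ** X) $ j $ i = transpose (transpose D ** X) $ i $ j" by (simp add: transpose_def)
      also have "\<dots> = (transpose X ** D) $ i $ j" by (simp only: matrix_transpose_mul transpose_transpose)
      also have "\<dots> = (transpose Y ** F) $ j $ i" by (rule key)
      finally show ?thesis .
    qed
    then show ?thesis by (simp add: vec_eq_iff)
  qed
  then show ?thesis by (simp add: D_def F_def)
qed

theorem lemma3:
  fixes X Xs :: "real^'r^'n1" and Y Ys :: "real^'r^'n2"
    and Ms :: "real^'n2^'n1" and Us :: "real^'r^'n1" and Vs :: "real^'r^'n2"
    and s :: "real^'r"
  assumes svd: "compact_svd Ms Us s Vs"
    and Xs_def: "Xs = Us ** diag_mat (\<chi> i. sqrt (s $ i))"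
    and Ys_def: "Ys = Vs ** diag_mat (\<chi> i. sqrt (s $ i))"
    and opt: "\<forall>P :: real^'r^'r. invertible P \<longrightarrow>
       (frob_norm (X ** mat 1 - Xs))\<^sup>2 + (frob_norm (Y ** transpose (matrix_inv (mat 1 :: real^'r^'r)) - Ys))\<^sup>2
       \<le> (frob_norm (X ** P - Xs))\<^sup>2 + (frob_norm (Y ** transpose (matrix_inv P) - Ys))\<^sup>2"
  shows "mat_inner (X - Xs) ((X ** transpose Y - Ms) ** Y)
           \<ge> (frob_norm (Y ** transpose (X - Xs)))\<^sup>2 - 1/4 * (frob_norm (X - Xs))^4
      \<and> mat_inner (Y - Ys) (transpose (X ** transpose Y - Ms) ** X)
           \<ge> (frob_norm (X ** transpose (Y - Ys)))\<^sup>2 - 1/4 * (frob_norm (Y - Ys))^4"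
proof -
  let ?S = "diag_mat (\<chi> i. sqrt (s $ i))"
  have spos: "\<forall>i. s $ i > 0" and Msv: "Ms = Us ** diag_mat s ** transpose Vs"
    using svd unfolding compact_svd_def by auto
  have Ms: "Ms = Xs ** transpose Ys"
  proof -
    have "Xs ** transpose Ys = Us ** (?S ** transpose ?S) ** transpose Vs"
      unfolding Xs_def Ys_def by (simp only: matrix_transpose_mul matrix_mul_assoc)
    also have "\<dots> = Ms" by (simp only: diag_sq[OF spos] Msv)
    finally show ?thesis by (rule sym)
  qed
  have bal: "transpose (X - Xs) ** X = transpose Y ** (Y - Ys)" by (rule balance[OF opt])
  have "transpose (transpose (X - Xs) ** X) = transpose (transpose Y ** (Y - Ys))" using bal by (rule arg_cong)
  then have "transpose X ** (X - Xs) = transpose (Y - Ys) ** Y"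
    by (simp only: matrix_transpose_mul transpose_transpose)
  then have bal2: "transpose (Y - Ys) ** Y = transpose X ** (X - Xs)" by (rule sym)
  note c1 = core[OF bal]
  note c2 = core[OF bal2]
  have tM: "transpose (X ** transpose Y - Ms) = Y ** transpose X - Ys ** transpose Xs"
    unfolding Ms by (simp only: tr_diff matrix_transpose_mul transpose_transpose)
  show ?thesis unfolding mat_inner_eq frob_eq tM unfolding Ms by (intro conjI c1 c2)
qed

end
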